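(* Let $\mathcal{P}\subset K[x_1,\ldots,x_n]$ be a chordal polynomial set with $x_1<\cdots<x_n$ as a perfect elimination ordering. For each $i=1,\ldots,n$ with $\mathcal{P}^{(i)}\neq\emptyset$, let $T_i\in K[x_1,\ldots,x_n]$ be a polynomial with $\mathrm{lv}(T_i)=x_i$ and $\mathrm{supp}(T_i)\subseteq \mathrm{supp}(\mathcal{P}^{(i)})$. For $i$ with $\mathcal{P}^{(i)}=\emptyset$, $T_i$ is absent. Then $\mathcal{T}=[T_1,\ldots,T_n]$, with the absent entries omitted, is a triangular set and $G(\mathcal{T})\subseteq G(\mathcal{P})$. Moreover, if $\mathrm{supp}(T_i)=\mathrm{supp}(\mathcal{P}^{(i)})$ for every $i$ with $\mathcal{P}^{(i)}\neq\emptyset$, then $G(\mathcal{T})=G(\mathcal{P})$.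
   Context: Let $K$ be a field and $K[x_1,\ldots,x_n]$ the polynomial ring, with the variables ordered $x_1<\cdots<x_n$. For a polynomial $F$, $\mathrm{supp}(F)$ is the set of variables effectively appearing in $F$. For a set of polynomials $\mathcal{P}$, $\mathrm{supp}(\mathcal{P})=\bigcup_{F\in\mathcal{P}}\mathrm{supp}(F)$. For a nonconstant $F$, $\mathrm{lv}(F)$ is the greatest variable in $\mathrm{supp}(F)$. For a polynomial set $\mathcal{P}$ and $1\le i\le n$, $\mathcal{P}^{(i)}=\{P\in\mathcal{P}:\mathrm{lv}(P)=x_i\}$; constants belong to no $\mathcal{P}^{(i)}$. The associated graph $G(\mathcal{P})$ is the undirected graph whose vertex set is $\mathrm{supp}(\mathcal{P})$, with an edge between distinct $x_i,x_j$ iff some $F\in\mathcal{P}$ has $x_i,x_j\in\mathrm{supp}(F)$. For graphs, $G\subseteq G'$ means that $G$ is a subgraph of $G'$, i.e. both the vertex set and the edge set are contained. An ordering of the vertices of a graph is a perfect elimination ordering if, for every vertex $v$, the set consisting of $v$ and all neighbours of $v$ smaller than $v$ is a clique. A polynomial set $\mathcal{P}$ is called chordal with $x_1<\cdots<x_n$ as a perfect elimination ordering if the restriction of this ordering to $\mathrm{supp}(\mathcal{P})$ is a perfect elimination ordering of $G(\mathcal{P})$. A triangular set is an ordered set $[T_1,\ldots,T_r]$ of nonconstant polynomials with $\mathrm{lv}(T_1)<\cdots<\mathrm{lv}(T_r)$. *)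

theory Defs
  imports "HOL-Library.Poly_Mapping"
begin

text \<open>Multivariate polynomials over K: finitely supported maps from monomials
(exponent vectors, finitely supported maps from variable indices to exponents)
to coefficients. Variable x_i is represented by the index i :: nat; the variable
ordering x_1 < ... < x_n is the order on nat.\<close>

type_synonym 'a mpoly = "(nat \<Rightarrow>\<^sub>0 nat) \<Rightarrow>\<^sub>0 'a"

definition vars :: "'a::zero mpoly \<Rightarrow> nat set" where
  "vars F = (\<Union>m \<in> Poly_Mapping.keys F. Poly_Mapping.keys m)"

definition supp_set :: "'a::zero mpoly set \<Rightarrow> nat set" where
  "supp_set P = \<Union> (vars ` P)"

definition nonconstant :: "'a::zero mpoly \<Rightarrow> bool" where
  "nonconstant F \<longleftrightarrow> vars F \<noteq> {}"

text \<open>Leading variable: greatest variable in supp(F) (meaningful for nonconstant F).\<close>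
definition lv :: "'a::zero mpoly \<Rightarrow> nat" where
  "lv F = Max (vars F)"

definition level_set :: "'a::zero mpoly set \<Rightarrow> nat \<Rightarrow> 'a mpoly set" where
  "level_set P i = {F \<in> P. nonconstant F \<and> lv F = i}"

text \<open>Undirected graphs as (vertex set, set of edges), edges being 2-element sets.\<close>
type_synonym graph = "nat set \<times> nat set set"

definition assoc_graph :: "'a::zero mpoly set \<Rightarrow> graph" where
  "assoc_graph P = (supp_set P,
     {{i, j} | i j. i \<noteq> j \<and> (\<exists>F \<in> P. i \<in> vars F \<and> j \<in> vars F)})"

definition subgraph :: "graph \<Rightarrow> graph \<Rightarrow> bool" where
  "subgraph G G' \<longleftrightarrow> fst G \<subseteq> fst G' \<and> snd G \<subseteq> snd G'"

definition is_clique :: "graph \<Rightarrow> nat set \<Rightarrow> bool" where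
  "is_clique G S \<longleftrightarrow> (\<forall>a \<in> S. \<forall>b \<in> S. a \<noteq> b \<longrightarrow> {a, b} \<in> snd G)"

definition is_peo :: "graph \<Rightarrow> bool" where
  "is_peo G \<longleftrightarrow> (\<forall>v \<in> fst G. is_clique G ({v} \<union> {u \<in> fst G. {u, v} \<in> snd G \<and> u < v}))"

definition chordal_peo :: "'a::zero mpoly set \<Rightarrow> bool" where
  "chordal_peo P \<longleftrightarrow> is_peo (assoc_graph P)"

definition triangular_set :: "'a::zero mpoly list \<Rightarrow> bool" where
  "triangular_set Ts \<longleftrightarrow> (\<forall>T \<in> set Ts. nonconstant T) \<and> sorted_wrt (\<lambda>S T. lv S < lv T) Ts"

end

theory Submission
  imports Defs
begin

lemma finite_vars: "finite (vars F)"
  unfolding vars_def by auto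

lemma lv_mem: "nonconstant F \<Longrightarrow> lv F \<in> vars F"
  unfolding lv_def nonconstant_def using finite_vars Max_in by blast

lemma lv_ge: "x \<in> vars F \<Longrightarrow> x \<le> lv F"
  unfolding lv_def using finite_vars Max_ge by blast

lemma level_supp_clique:
  assumes chordal: "chordal_peo P" and ne: "level_set P i \<noteq> {}"
  shows "is_clique (assoc_graph P) (supp_set (level_set P i))"
proof -
  let ?G = "assoc_graph P"
  obtain F0 where F0: "F0 \<in> level_set P i" using ne by blast
  have iv: "i \<in> fst ?G"
    using F0 lv_mem unfolding level_set_def assoc_graph_def supp_set_def by fastforce
  have sub: "supp_set (level_set P i) \<subseteq> {i} \<union> {u \<in> fst ?G. {u, i} \<in> snd ?G \<and> u < i}"
  proof
    fix u assume "u \<in> supp_set (level_set P i)"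
    then obtain F where F: "F \<in> P" "nonconstant F" "lv F = i" "u \<in> vars F"
      unfolding supp_set_def level_set_def by auto
    have "i \<in> vars F" using F lv_mem by metis
    moreover have "u \<le> i" using F lv_ge by metis
    ultimately show "u \<in> {i} \<union> {u \<in> fst ?G. {u, i} \<in> snd ?G \<and> u < i}"
      using F unfolding assoc_graph_def supp_set_def by (cases "u = i") force+
  qed
  have "is_clique ?G ({i} \<union> {u \<in> fst ?G. {u, i} \<in> snd ?G \<and> u < i})"
    using chordal iv unfolding chordal_peo_def is_peo_def by blast
  then show ?thesis using sub unfolding is_clique_def by blast
qed

theorem proposition3p1:
  fixes P :: "'a::field mpoly set" and n :: nat and T :: "nat \<Rightarrow> 'a mpoly"
  assumes P_ring: "\<forall>F \<in> P. vars F \<subseteq> {1..n}"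
    and chordal: "chordal_peo P"
    and T_ring: "\<forall>i \<in> {1..n}. level_set P i \<noteq> {} \<longrightarrow> vars (T i) \<subseteq> {1..n}"
    and T_nc: "\<forall>i \<in> {1..n}. level_set P i \<noteq> {} \<longrightarrow> nonconstant (T i) \<and> lv (T i) = i"
    and T_supp: "\<forall>i \<in> {1..n}. level_set P i \<noteq> {} \<longrightarrow> vars (T i) \<subseteq> supp_set (level_set P i)"
  shows "triangular_set (map T (filter (\<lambda>i. level_set P i \<noteq> {}) [1..<Suc n]))
    \<and> subgraph (assoc_graph (set (map T (filter (\<lambda>i. level_set P i \<noteq> {}) [1..<Suc n]))))
               (assoc_graph P)
    \<and> ((\<forall>i \<in> {1..n}. level_set P i \<noteq> {} \<longrightarrow> vars (T i) = supp_set (level_set P i))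
       \<longrightarrow> assoc_graph (set (map T (filter (\<lambda>i. level_set P i \<noteq> {}) [1..<Suc n])))
           = assoc_graph P)"
proof -
  define L where "L = filter (\<lambda>i. level_set P i \<noteq> {}) [1..<Suc n]"
  have setL: "set L = {i \<in> {1..n}. level_set P i \<noteq> {}}" unfolding L_def by auto
  have sL: "sorted_wrt (<) L" unfolding L_def
    by (intro sorted_wrt_filter) (rule sorted_wrt_upt)
  have tri: "triangular_set (map T L)"
    unfolding triangular_set_def
  proof
    show "\<forall>x\<in>set (map T L). nonconstant x" using T_nc setL by auto
    have "sorted_wrt (\<lambda>i j. lv (T i) < lv (T j)) L"
      using sorted_wrt_mono_rel[OF _ sL, of "\<lambda>i j. lv (T i) < lv (T j)"] T_nc setL by auto
    then show "sorted_wrt (\<lambda>S T. lv S < lv T) (map T L)" by (simp add: sorted_wrt_map)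
  qed
  have subg: "subgraph (assoc_graph (set (map T L))) (assoc_graph P)"
    unfolding subgraph_def
  proof
    show "fst (assoc_graph (set (map T L))) \<subseteq> fst (assoc_graph P)"
      using T_supp setL unfolding assoc_graph_def supp_set_def level_set_def by fastforce
    show "snd (assoc_graph (set (map T L))) \<subseteq> snd (assoc_graph P)"
    proof
      fix e assume "e \<in> snd (assoc_graph (set (map T L)))"
      then obtain a b i where e: "e = {a, b}" "a \<noteq> b" "i \<in> set L" "a \<in> vars (T i)" "b \<in> vars (T i)"
        unfolding assoc_graph_def by auto
      have ne: "level_set P i \<noteq> {}" "i \<in> {1..n}" using e setL by auto
      have "a \<in> supp_set (level_set P i)" "b \<in> supp_set (level_set P i)"
        using T_supp ne e by auto
      then show "e \<in> snd (assoc_graph P)"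
        using level_supp_clique[OF chordal ne(1)] e unfolding is_clique_def by blast
    qed
  qed
  have eq: "assoc_graph (set (map T L)) = assoc_graph P"
    if H: "\<forall>i \<in> {1..n}. level_set P i \<noteq> {} \<longrightarrow> vars (T i) = supp_set (level_set P i)"
  proof -
    have key: "\<exists>i \<in> set L. vars F \<subseteq> vars (T i)" if F: "F \<in> P" "nonconstant F" for F
    proof -
      have l: "lv F \<in> {1..n}" using lv_mem[OF F(2)] P_ring F(1) by blast
      have Fl: "F \<in> level_set P (lv F)" using F unfolding level_set_def by auto
      hence "level_set P (lv F) \<noteq> {}" by blast
      moreover have "vars F \<subseteq> supp_set (level_set P (lv F))"
        using Fl unfolding supp_set_def by blast
      ultimately show ?thesis using H l setL by auto
    qed
    have v: "fst (assoc_graph P) \<subseteq> fst (assoc_graph (set (map T L)))"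
    proof
      fix x assume "x \<in> fst (assoc_graph P)"
      then obtain F where F: "F \<in> P" "x \<in> vars F" unfolding assoc_graph_def supp_set_def by auto
      then have "nonconstant F" unfolding nonconstant_def by auto
      then obtain i where "i \<in> set L" "vars F \<subseteq> vars (T i)" using key F by blast
      then show "x \<in> fst (assoc_graph (set (map T L)))"
        using F unfolding assoc_graph_def supp_set_def by auto
    qed
    have ed: "snd (assoc_graph P) \<subseteq> snd (assoc_graph (set (map T L)))"
    proof
      fix e assume "e \<in> snd (assoc_graph P)"
      then obtain a b F where e: "e = {a, b}" "a \<noteq> b" "F \<in> P" "a \<in> vars F" "b \<in> vars F"
        unfolding assoc_graph_def by auto
      then have "nonconstant F" unfolding nonconstant_def by auto
      then obtain i where "i \<in> set L" "vars F \<subseteq> vars (T i)" using key e by blast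
      then show "e \<in> snd (assoc_graph (set (map T L)))"
        using e unfolding assoc_graph_def by auto
    qed
    show ?thesis using v ed subg unfolding subgraph_def by (auto simp add: prod_eq_iff)
  qed
  show ?thesis using tri subg eq unfolding L_def by blast
qed

end
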